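(* Let $n\ge1$, $k>0$ and $P\in\mathscr P_n$. Then for all $\alpha,\beta\in\mathbb C$ with $|\alpha|\le1$, $|\beta|\le1$, all $R>r\ge k$ and all $|z|=1$, $$\big|B[P\circ\sigma](z)+\Phi_k(R,r,\alpha,\beta)B[P\circ\rho](z)\big|\le\frac{1}{k^n}\big|R^n+r^n\Phi_k(R,r,\alpha,\beta)\big|\,|B[z^n]|\,\max_{|z|=k}|P(z)|.$$ Equality holds for $P(z)=az^n$, $a\ne0$.
   Context: For an integer $n\ge1$, $\mathscr P_n$ denotes the set of complex polynomials of degree at most $n$. Fix complex numbers $\lambda_0,\lambda_1,\lambda_2$ such that all zeros of $U(z)=\lambda_0+n\lambda_1 z+\frac{n(n-1)}{2}\lambda_2 z^2$ lie in the half-plane $\{z\in\mathbb C:|z|\le|z-n/2|\}$. The operator $B$ (of the class $\mathcal B_n$) sends $P\in\mathscr P_n$ to $B[P](z)=\lambda_0P(z)+\lambda_1\frac{nz}{2}P'(z)+\lambda_2\left(\frac{nz}{2}\right)^2\frac{P''(z)}{2!}$. For a polynomial $P$ and a map $\rho$, $P\circ\rho$ denotes $z\mapsto P(\rho(z))$, and $B[P\circ\rho](z)$ is $B$ applied to the polynomial $P\circ\rho$, evaluated at $z$. $B[z^n]$ denotes $B$ applied to the monomial $z\mapsto z^n$, evaluated at the point $z$ under consideration; thus $|B[z^n]|=|z|^n\,|\lambda_0+\lambda_1 n^2/2+\lambda_2 n^3(n-1)/8|$. For $k>0$, $R,r>0$ and $\alpha,\beta\in\mathbb C$: $\Phi_k(R,r,\alpha,\beta)=\beta\left\{\left(\frac{R+k}{k+r}\right)^n-|\alpha|\right\}-\alpha$;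 and $\sigma(z)=Rz$, $\rho(z)=rz$. *)

theory Defs
  imports "HOL-Analysis.Analysis" "HOL-Computational_Algebra.Polynomial"
begin

definition Bop :: "nat \<Rightarrow> complex \<Rightarrow> complex \<Rightarrow> complex \<Rightarrow> complex poly \<Rightarrow> complex \<Rightarrow> complex" where
  "Bop n l0 l1 l2 P z =
     l0 * poly P z
     + l1 * (of_nat n * z / 2) * poly (pderiv P) z
     + l2 * (of_nat n * z / 2)^2 * poly (pderiv (pderiv P)) z / 2"

definition Upoly :: "nat \<Rightarrow> complex \<Rightarrow> complex \<Rightarrow> complex \<Rightarrow> complex \<Rightarrow> complex" where
  "Upoly n l0 l1 l2 z = l0 + of_nat n * l1 * z + (of_nat n * (of_nat n - 1) / 2) * l2 * z^2"

definition Phi :: "nat \<Rightarrow> real \<Rightarrow> real \<Rightarrow> real \<Rightarrow> complex \<Rightarrow> complex \<Rightarrow> complex" where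
  "Phi n k R r \<alpha> \<beta> = \<beta> * complex_of_real (((R + k) / (k + r))^n - cmod \<alpha>) - \<alpha>"

end

theory Submission
  imports Defs "HOL-Computational_Algebra.Fundamental_Theorem_Algebra"
begin


fun e2 :: "complex list \<Rightarrow> complex" where
  "e2 [] = 0"
| "e2 (w # ws) = w * sum_list ws + e2 ws"

lemma inv_half_plane:
  fixes a :: complex and d :: real
  assumes "Re a \<ge> d" "d > 0"
  shows "Re (1/a) \<ge> d * (cmod (1/a))^2"
proof -
  have a0: "a \<noteq> 0" using assms by auto
  have "Re (1/a) = Re a / (cmod a)^2" by (simp add: Re_divide cmod_power2)
  moreover have "(cmod (1/a))^2 = 1/(cmod a)^2" by (simp add: norm_divide power_divide)
  moreover have "(cmod a)^2 > 0" using a0 by simp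
  ultimately show ?thesis using assms by (simp add: divide_right_mono)
qed

lemma laguerre:
  fixes A B C \<zeta> w :: complex and m :: nat
  assumes z: "Re \<zeta> > 1/2" and w: "Re w > 1/2"
    and nz: "\<forall>x. Re x > 1/2 \<longrightarrow> A + of_nat (Suc m) * B * x + C * (of_nat (Suc m) * (of_nat (Suc m) - 1)/2) * x^2 \<noteq> 0"
  shows "A + B*w + of_nat m * (B + C*w) * \<zeta> + C * (of_nat m * (of_nat m - 1)/2) * \<zeta>^2 \<noteq> 0"
proof
  define N :: complex where "N = of_nat (Suc m)"
  define p where "p = (\<lambda>x. A + N * B * x + C * (N * (N - 1)/2) * x^2)"
  define d where "d = Re \<zeta> - 1/2"
  have d: "d > 0" using z by (simp add: d_def)
  have Nm: "N - 1 = of_nat m" by (simp add: N_def)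
  have N0: "N \<noteq> 0" by (metis N_def of_nat_eq_0_iff nat.distinct(1))
  have pnz: "\<And>x. Re x > 1/2 \<Longrightarrow> p x \<noteq> 0" using nz by (simp add: p_def N_def)
  assume D0: "A + B*w + of_nat m * (B + C*w) * \<zeta> + C * (of_nat m * (of_nat m - 1)/2) * \<zeta>^2 = 0"
  have Did: "A + B*w + of_nat m * (B + C*w) * \<zeta> + C * (of_nat m * (of_nat m - 1)/2) * \<zeta>^2
      = p \<zeta> + (w - \<zeta>) * (B + C * of_nat m * \<zeta>)"
    unfolding p_def N_def by (simp add: field_simps power2_eq_square)
  have Rew: "Re (\<zeta> - w) < d" using w by (simp add: d_def)
  show False
  proof (cases "C * of_nat m = 0")
    case True
    have pl: "p x = A + N * B * x" for x
      using True unfolding p_def Nm[symmetric] by (auto simp: algebra_simps)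
    have DD: "p \<zeta> + (w - \<zeta>) * B = 0" using D0 Did True by (simp add: algebra_simps)
    show False
    proof (cases "B = 0")
      case True
      then show False using DD pnz[OF z] by simp
    next
      case False
      define r where "r = - A / (N * B)"
      have "p r = 0" using False N0 by (simp add: pl r_def)
      hence r: "Re r \<le> 1/2" using pnz by force
      have "p \<zeta> + (w - \<zeta>) * B = B * (N * (\<zeta> - r) - (\<zeta> - w))"
        using False N0 by (simp add: pl r_def field_simps)
      hence "\<zeta> - w = N * (\<zeta> - r)" using DD False by simp
      hence "Re (\<zeta> - w) = real (Suc m) * Re (\<zeta> - r)" by (simp add: N_def)
      moreover have "Re (\<zeta> - r) \<ge> d" using r by (simp add: d_def)
      moreover have "real (Suc m) * Re (\<zeta> - r) \<ge> 1 * Re (\<zeta> - r)"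
        using \<open>Re (\<zeta> - r) \<ge> d\<close> d by (intro mult_right_mono) auto
      ultimately have "Re (\<zeta> - w) \<ge> d" by simp
      then show False using Rew by simp
    qed
  next
    case False
    hence C0: "C \<noteq> 0" and m0: "m \<noteq> 0" by auto
    define c2 where "c2 = C * (N * (N - 1)/2)"
    define c1 where "c1 = N * B"
    have c20: "c2 \<noteq> 0" using C0 m0 N0 by (simp add: c2_def Nm)
    define s where "s = csqrt (c1^2 - 4*c2*A)"
    have s2: "s^2 = c1^2 - 4*c2*A" by (simp add: s_def)
    define r1 where "r1 = (-c1 + s)/(2*c2)"
    define r2 where "r2 = (-c1 - s)/(2*c2)"
    have sumr: "r1 + r2 = - c1 / c2" using c20 by (simp add: r1_def r2_def field_simps)
    have ss: "(-c1+s)*(-c1-s) = 4*c2*A" using s2 by (simp add: algebra_simps power2_eq_square)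
    have prodr: "r1 * r2 = A / c2"
    proof -
      have "r1 * r2 = ((-c1+s)*(-c1-s)) / (4*c2*c2)" by (simp add: r1_def r2_def)
      also have "\<dots> = (4*c2*A) / (4*c2*c2)" by (simp only: ss)
      also have "\<dots> = A / c2" using c20 by simp
      finally show ?thesis .
    qed
    have pf: "p x = c2 * (x - r1) * (x - r2)" for x
    proof -
      have "c2 * (x - r1) * (x - r2) = c2 * x^2 - c2 * (r1 + r2) * x + c2 * (r1 * r2)"
        by (simp add: algebra_simps power2_eq_square)
      also have "\<dots> = c2 * x^2 + c1 * x + A" using c20 by (simp add: sumr prodr)
      finally show ?thesis by (simp add: p_def c2_def c1_def algebra_simps)
    qed
    have r1: "Re r1 \<le> 1/2" using pnz[of r1] pf[of r1] by force
    have r2: "Re r2 \<le> 1/2" using pnz[of r2] pf[of r2] by force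
    define a where "a = \<zeta> - r1"
    define b where "b = \<zeta> - r2"
    define e where "e = \<zeta> - w"
    have ra: "Re a \<ge> d" using r1 by (simp add: a_def d_def)
    have rb: "Re b \<ge> d" using r2 by (simp add: b_def d_def)
    have a0: "a \<noteq> 0" and b0: "b \<noteq> 0" using ra rb d by auto
    have key: "N * (p \<zeta> + (w - \<zeta>) * (B + C * of_nat m * \<zeta>)) = c2 * (N * a * b - e * (a + b))"
    proof -
      have "N * (B + C * of_nat m * \<zeta>) = c1 + 2 * c2 * \<zeta>"
        by (simp add: c1_def c2_def Nm algebra_simps)
      also have "\<dots> = c2 * (a + b)"
      proof -
        have sr: "c2*r1 + c2*r2 = -c1" using sumr c20 by (simp add: field_simps)
        have "c2 * (a + b) = 2*c2*\<zeta> - (c2*r1 + c2*r2)" by (simp add: a_def b_def algebra_simps)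
        thus ?thesis by (simp only: sr) simp
      qed
      finally have h: "N * (B + C * of_nat m * \<zeta>) = c2 * (a + b)" .
      have "N * (p \<zeta> + (w - \<zeta>) * (B + C * of_nat m * \<zeta>)) = N * p \<zeta> - e * (N * (B + C * of_nat m * \<zeta>))"
        by (simp add: e_def algebra_simps)
      also have "\<dots> = N * (c2 * a * b) - e * (c2 * (a + b))"
        by (simp only: h pf a_def b_def)
      also have "\<dots> = c2 * (N * a * b - e * (a + b))" by (simp add: algebra_simps)
      finally show ?thesis .
    qed
    have eq: "N * a * b = e * (a + b)" using key D0 Did c20 by simp
    have e0: "e \<noteq> 0" using eq a0 b0 N0 by auto
    define v1 where "v1 = 1/a"
    define v2 where "v2 = 1/b"
    define V where "V = 1/e"
    have "Re (a + b) > 0" using ra rb d by simp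
    hence ab0: "a + b \<noteq> 0" by (metis zero_complex.simps(1) less_irrefl)
    have VV: "V = (v1 + v2) / N"
    proof -
      have "e = N * a * b / (a + b)" using eq ab0 by (simp add: eq_divide_eq)
      hence "V = (a + b) / (N * a * b)" unfolding V_def by simp
      also have "\<dots> = (v1 + v2) / N" using a0 b0 N0 by (simp add: v1_def v2_def field_simps)
      finally show ?thesis .
    qed
    have h1: "Re v1 \<ge> d * (cmod v1)^2" unfolding v1_def by (rule inv_half_plane[OF ra d])
    have h2: "Re v2 \<ge> d * (cmod v2)^2" unfolding v2_def by (rule inv_half_plane[OF rb d])
    have Nr: "N = of_real (real (Suc m))" by (simp add: N_def)
    have m2: "real (Suc m) \<ge> 2" using m0 by simp
    have "(cmod V)^2 = (cmod (v1 + v2))^2 / (real (Suc m))^2"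
    proof -
      have cN: "cmod N = real (Suc m)" by (simp only: N_def norm_of_nat)
      show ?thesis by (simp add: VV norm_divide cN power_divide)
    qed
    also have "\<dots> \<le> (2 * ((cmod v1)^2 + (cmod v2)^2)) / (real (Suc m))^2"
    proof (rule divide_right_mono)
      have "cmod (v1 + v2) \<le> cmod v1 + cmod v2" by (rule norm_triangle_ineq)
      hence "(cmod (v1 + v2))^2 \<le> (cmod v1 + cmod v2)^2" by (rule power_mono) simp
      also have "\<dots> \<le> 2 * ((cmod v1)^2 + (cmod v2)^2)"
      proof -
        have "0 \<le> (cmod v1 - cmod v2)^2" by simp
        moreover have "(cmod v1 + cmod v2)^2 + (cmod v1 - cmod v2)^2 = 2 * ((cmod v1)^2 + (cmod v2)^2)"
          by (simp add: power2_eq_square algebra_simps)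
        ultimately show ?thesis by linarith
      qed
      finally show "(cmod (v1 + v2))^2 \<le> 2 * ((cmod v1)^2 + (cmod v2)^2)" .
    qed simp
    also have "\<dots> \<le> ((cmod v1)^2 + (cmod v2)^2) / real (Suc m)"
    proof -
      define Y where "Y = (cmod v1)^2 + (cmod v2)^2"
      have Y: "Y \<ge> 0" by (simp add: Y_def)
      have "2 * Y / (real (Suc m))^2 = (2 / real (Suc m)) * (Y / real (Suc m))" by (simp add: power2_eq_square)
      also have "\<dots> \<le> 1 * (Y / real (Suc m))" using m2 Y by (intro mult_right_mono) auto
      finally show ?thesis by (simp add: Y_def)
    qed
    finally have "d * (cmod V)^2 \<le> d * (((cmod v1)^2 + (cmod v2)^2) / real (Suc m))"
      by (rule mult_left_mono[OF _ less_imp_le[OF d]])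
    also have "\<dots> = (d * (cmod v1)^2 + d * (cmod v2)^2) / real (Suc m)" by (simp add: distrib_left)
    also have "\<dots> \<le> (Re v1 + Re v2) / real (Suc m)"
      using h1 h2 by (intro divide_right_mono) auto
    also have "\<dots> = Re V" by (simp add: VV Nr Re_divide_of_real)
    finally have hV: "Re V \<ge> d * (cmod V)^2" .
    have eV: "e = 1 / V" by (simp add: V_def)
    have "Re e = Re V / (cmod V)^2"
      unfolding eV by (simp add: Re_divide cmod_power2)
    also have "\<dots> \<ge> d" using hV e0
      by (simp add: V_def le_divide_eq)
    finally show False using Rew by (simp add: e_def)
  qed
qed

lemma gws:
  fixes A B C :: complex
  assumes "\<forall>x. Re x > 1/2 \<longrightarrow> A + of_nat (length ws) * B * x + C * (of_nat (length ws) * (of_nat (length ws) - 1)/2) * x^2 \<noteq> 0"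
    and "\<forall>w\<in>set ws. Re w > 1/2"
  shows "A + B * sum_list ws + C * e2 ws \<noteq> 0"
  using assms
proof (induction ws arbitrary: A B)
  case Nil
  have "1/2 < Re (1::complex)" by simp
  then show ?case using spec[OF Nil.prems(1), of 1] by simp
next
  case (Cons w vs)
  have w: "Re w > 1/2" using Cons.prems(2) by simp
  have "A + B * w + (B + C * w) * sum_list vs + C * e2 vs \<noteq> 0"
  proof (rule Cons.IH)
    show "\<forall>w\<in>set vs. Re w > 1/2" using Cons.prems(2) by simp
    show "\<forall>x. Re x > 1/2 \<longrightarrow> A + B * w + of_nat (length vs) * (B + C * w) * x
            + C * (of_nat (length vs) * (of_nat (length vs) - 1)/2) * x^2 \<noteq> 0"
    proof (intro allI impI)
      fix x :: complex assume x: "Re x > 1/2"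
      have h: "\<forall>x. Re x > 1/2 \<longrightarrow> A + of_nat (Suc (length vs)) * B * x + C * (of_nat (Suc (length vs)) * (of_nat (Suc (length vs)) - 1)/2) * x^2 \<noteq> 0"
        using Cons.prems(1) by simp
      show "A + B * w + of_nat (length vs) * (B + C * w) * x
            + C * (of_nat (length vs) * (of_nat (length vs) - 1)/2) * x^2 \<noteq> 0"
        by (rule laguerre[OF x w h])
    qed
  qed
  thus ?case by (simp add: algebra_simps)
qed

lemma bprod:
  fixes zs :: "complex list" and z :: complex
  assumes "\<forall>a\<in>set zs. a \<noteq> z"
  shows "z * poly (pderiv (\<Prod>a\<leftarrow>zs. [:-a,1:])) z = poly (\<Prod>a\<leftarrow>zs. [:-a,1:]) z * sum_list (map (\<lambda>a. z/(z-a)) zs)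
       \<and> z^2 * poly (pderiv (pderiv (\<Prod>a\<leftarrow>zs. [:-a,1:]))) z = 2 * poly (\<Prod>a\<leftarrow>zs. [:-a,1:]) z * e2 (map (\<lambda>a. z/(z-a)) zs)"
  using assms
proof (induction zs)
  case Nil
  then show ?case by simp
next
  case (Cons a zs)
  define G where "G = (\<Prod>a\<leftarrow>zs. [:-a,1:])"
  define g where "g = poly G z"
  define g1 where "g1 = poly (pderiv G) z"
  define g2 where "g2 = poly (pderiv (pderiv G)) z"
  define E1 where "E1 = sum_list (map (\<lambda>a. z/(z-a)) zs)"
  define E2 where "E2 = e2 (map (\<lambda>a. z/(z-a)) zs)"
  have az: "z - a \<noteq> 0" using Cons.prems by auto
  have IH: "z * g1 = g * E1" "z^2 * g2 = 2 * g * E2"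
    using Cons.IH Cons.prems by (auto simp: G_def g_def g1_def g2_def E1_def E2_def)
  have D1: "pderiv ([:-a,1:] * G) = [:-a,1:] * pderiv G + G"
    by (subst pderiv_mult) (simp add: pderiv_pCons)
  have D2: "pderiv (pderiv ([:-a,1:] * G)) = [:-a,1:] * pderiv (pderiv G) + (pderiv G + pderiv G)"
    unfolding D1 by (subst pderiv_add, subst pderiv_mult) (simp add: pderiv_pCons)
  have d1: "poly (pderiv ([:-a,1:] * G)) z = g + (z - a) * g1"
    by (simp only: D1 poly_add poly_mult) (simp add: g_def g1_def)
  have d2: "poly (pderiv (pderiv ([:-a,1:] * G))) z = 2 * g1 + (z - a) * g2"
    by (simp only: D2 poly_add poly_mult) (simp add: g1_def g2_def)
  have p0: "poly ([:-a,1:] * G) z = (z - a) * g" by (simp add: g_def algebra_simps)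
  have w: "z / (z - a) * (z - a) = z" using az by simp
  have X: "z * poly (pderiv ([:-a,1:] * G)) z = (z - a) * g * (z/(z-a) + E1)"
  proof -
    have "z * poly (pderiv ([:-a,1:] * G)) z = z * g + (z - a) * (z * g1)" by (simp only: d1) (simp add: algebra_simps)
    also have "\<dots> = z * g + (z - a) * (g * E1)" by (simp only: IH)
    also have "\<dots> = (z - a) * g * (z/(z-a) + E1)" using az by (simp add: field_simps)
    finally show ?thesis .
  qed
  moreover have Y: "z^2 * poly (pderiv (pderiv ([:-a,1:] * G))) z = 2 * ((z - a) * g) * (z/(z-a) * E1 + E2)"
  proof -
    have "z^2 * poly (pderiv (pderiv ([:-a,1:] * G))) z = 2 * z * (z * g1) + (z - a) * (z^2 * g2)"
      by (simp only: d2) (simp add: algebra_simps power2_eq_square)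
    also have "\<dots> = 2 * z * (g * E1) + (z - a) * (2 * g * E2)" by (simp only: IH)
    also have "\<dots> = 2 * ((z - a) * g) * (z/(z-a) * E1 + E2)" using az by (simp add: field_simps)
    finally show ?thesis .
  qed
  have L: "(\<Prod>x\<leftarrow>a#zs. [:-x,1:]) = [:-a,1:] * G" by (simp add: G_def)
  have S1: "sum_list (map (\<lambda>a. z/(z-a)) (a#zs)) = z/(z-a) + E1" by (simp add: E1_def)
  have S2: "e2 (map (\<lambda>a. z/(z-a)) (a#zs)) = z/(z-a) * E1 + E2" by (simp add: E1_def E2_def)
  show ?case unfolding L S1 S2 p0 using X Y by (rule conjI)
qed

lemma bop_prod:
  fixes zs :: "complex list" and z c :: complex
  assumes "\<forall>a\<in>set zs. a \<noteq> z"
  shows "Bop n l0 l1 l2 (smult c (\<Prod>a\<leftarrow>zs. [:-a,1:])) z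
     = c * poly (\<Prod>a\<leftarrow>zs. [:-a,1:]) z * (l0 + (l1 * of_nat n / 2) * sum_list (map (\<lambda>a. z/(z-a)) zs)
         + (l2 * of_nat n ^ 2 / 4) * e2 (map (\<lambda>a. z/(z-a)) zs))"
proof -
  define G where "G = (\<Prod>a\<leftarrow>zs. [:-a,1:])"
  have h: "z * poly (pderiv G) z = poly G z * sum_list (map (\<lambda>a. z/(z-a)) zs)"
     "z^2 * poly (pderiv (pderiv G)) z = 2 * poly G z * e2 (map (\<lambda>a. z/(z-a)) zs)"
    using bprod[OF assms] by (auto simp: G_def)
  have "Bop n l0 l1 l2 (smult c G) z = c * (l0 * poly G z + l1 * (of_nat n / 2) * (z * poly (pderiv G) z)
     + l2 * (of_nat n ^2 / 8) * (z^2 * poly (pderiv (pderiv G)) z))"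
    by (simp add: Bop_def pderiv_smult algebra_simps power2_eq_square)
  also have "\<dots> = c * poly G z * (l0 + (l1 * of_nat n / 2) * sum_list (map (\<lambda>a. z/(z-a)) zs)
         + (l2 * of_nat n ^ 2 / 4) * e2 (map (\<lambda>a. z/(z-a)) zs))"
    by (simp only: h) (simp add: algebra_simps)
  finally show ?thesis by (simp add: G_def)
qed

lemma poly_factor_list:
  fixes G :: "complex poly"
  assumes "G \<noteq> 0"
  obtains zs where "length zs = degree G" "G = smult (lead_coeff G) (\<Prod>a\<leftarrow>zs. [:-a,1:])"
    "\<forall>a\<in>set zs. poly G a = 0"
proof -
  obtain zs where zs: "mset zs = proots G" using ex_mset by blast
  have "G = smult (lead_coeff G) (\<Prod>x\<in>#proots G. [:-x, 1:])"
    by (rule complex_poly_decompose_multiset [symmetric])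
  also have "(\<Prod>x\<in>#proots G. [:-x, 1:]) = (\<Prod>x\<leftarrow>zs. [:-x, 1:])"
    by (subst prod_mset_prod_list [symmetric]) (simp add: zs)
  finally have eq: "G = smult (lead_coeff G) (\<Prod>x\<leftarrow>zs. [:-x, 1:])" .
  have "length zs = size (proots G)" by (metis size_mset zs)
  also have "\<dots> = degree G" by (rule size_proots_complex)
  finally have l: "length zs = degree G" .
  have "\<forall>a\<in>set zs. poly G a = 0"
  proof
    fix a assume "a \<in> set zs"
    hence "a \<in># proots G" by (metis set_mset_mset zs)
    thus "poly G a = 0" using assms by simp
  qed
  with l eq that show ?thesis by blast
qed

lemma re_ratio:
  fixes z a :: complex
  assumes "cmod a < 1" "cmod z \<ge> 1"
  shows "Re (z / (z - a)) > 1/2"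
proof -
  have za: "z - a \<noteq> 0" using assms by auto
  define D where "D = (Re z - Re a)^2 + (Im z - Im a)^2"
  have "Re z - Re a \<noteq> 0 \<or> Im z - Im a \<noteq> 0" using za by (auto simp: complex_eq_iff)
  hence D: "D > 0" unfolding D_def by (simp add: sum_power2_gt_zero_iff)
  have "cmod a < cmod z" using assms by simp
  hence "(cmod a)^2 < (cmod z)^2" by (rule power_strict_mono) auto
  hence lt: "(Re a)^2 + (Im a)^2 < (Re z)^2 + (Im z)^2" by (simp add: cmod_power2)
  define Nn where "Nn = Re z * (Re z - Re a) + Im z * (Im z - Im a)"
  have e: "Re (z / (z - a)) = Nn / D"
    by (simp add: Re_divide D_def Nn_def)
  have "2 * Nn - D = (Re z)^2 + (Im z)^2 - ((Re a)^2 + (Im a)^2)"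
    by (simp add: D_def Nn_def power2_eq_square algebra_simps)
  hence "1/2 * D < Nn" using lt by linarith
  thus ?thesis unfolding e using D by (simp add: less_divide_eq)
qed

lemma U_nz:
  fixes l0 l1 l2 :: complex and n :: nat
  assumes n: "n \<ge> 1"
    and U: "\<And>z. Upoly n l0 l1 l2 z = 0 \<Longrightarrow> cmod z \<le> cmod (z - of_nat n / 2)"
    and x: "Re x > 1/2"
  shows "l0 + of_nat n * (l1 * of_nat n / 2) * x + (l2 * of_nat n ^ 2 / 4) * (of_nat n * (of_nat n - 1)/2) * x^2 \<noteq> 0"
proof
  assume h: "l0 + of_nat n * (l1 * of_nat n / 2) * x + (l2 * of_nat n ^ 2 / 4) * (of_nat n * (of_nat n - 1)/2) * x^2 = 0"
  define y where "y = of_nat n * x / 2"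
  have "Upoly n l0 l1 l2 y = 0" using h unfolding Upoly_def y_def
    by (simp add: field_simps power2_eq_square)
  hence le: "cmod y \<le> cmod (y - of_nat n / 2)" by (rule U)
  have ry: "Re y = real n * Re x / 2" by (simp add: y_def)
  have iy: "Im (y - of_nat n / 2) = Im y" by simp
  have ry2: "Re (y - of_nat n / 2) = Re y - real n / 2" by simp
  have "(cmod y)^2 \<le> (cmod (y - of_nat n / 2))^2" using le by (simp add: power_mono)
  hence "(Re y)^2 \<le> (Re y - real n / 2)^2" by (simp only: cmod_power2 iy ry2)
  hence "real n * Re y \<le> (real n / 2)^2" by (simp add: power2_eq_square algebra_simps)
  moreover have "real n * Re y > (real n / 2)^2"
  proof -
    have "real n * Re y = real n * real n * (Re x / 2)" by (simp add: ry)
    moreover have "real n * real n * (Re x / 2) > real n * real n * (1/4)" using x n by (intro mult_strict_left_mono) auto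
    moreover have "(real n / 2)^2 = real n * real n * (1/4)" by (simp add: power2_eq_square)
    ultimately show ?thesis by linarith
  qed
  ultimately show False by simp
qed

lemma bop_nz:
  fixes l0 l1 l2 :: complex and n :: nat and G :: "complex poly" and z :: complex
  assumes n: "n \<ge> 1"
    and U: "\<And>z. Upoly n l0 l1 l2 z = 0 \<Longrightarrow> cmod z \<le> cmod (z - of_nat n / 2)"
    and dG: "degree G = n"
    and G: "\<And>x. cmod x \<ge> 1 \<Longrightarrow> poly G x \<noteq> 0"
    and z: "cmod z \<ge> 1"
  shows "Bop n l0 l1 l2 G z \<noteq> 0"
proof -
  have G0: "G \<noteq> 0" using dG n by auto
  obtain zs where l: "length zs = degree G" and eq: "G = smult (lead_coeff G) (\<Prod>a\<leftarrow>zs. [:-a,1:])"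
    and r: "\<forall>a\<in>set zs. poly G a = 0"
    using poly_factor_list[OF G0] by blast
  have rs: "\<forall>a\<in>set zs. cmod a < 1" using r G by (meson not_le)
  have az: "\<forall>a\<in>set zs. a \<noteq> z" using rs z by auto
  define ws where "ws = map (\<lambda>a. z/(z-a)) zs"
  have "Bop n l0 l1 l2 G z = lead_coeff G * poly (\<Prod>a\<leftarrow>zs. [:-a,1:]) z * (l0 + (l1 * of_nat n / 2) * sum_list ws
         + (l2 * of_nat n ^ 2 / 4) * e2 ws)"
    unfolding ws_def by (subst eq, rule bop_prod[OF az])
  moreover have "lead_coeff G * poly (\<Prod>a\<leftarrow>zs. [:-a,1:]) z \<noteq> 0"
  proof -
    have "poly G z = lead_coeff G * poly (\<Prod>a\<leftarrow>zs. [:-a,1:]) z" by (subst eq) simp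
    thus ?thesis using G[OF z] by simp
  qed
  moreover have "l0 + (l1 * of_nat n / 2) * sum_list ws + (l2 * of_nat n ^ 2 / 4) * e2 ws \<noteq> 0"
  proof (rule gws)
    have lw: "length ws = n" using l dG by (simp add: ws_def)
    show "\<forall>x. Re x > 1/2 \<longrightarrow> l0 + of_nat (length ws) * (l1 * of_nat n / 2) * x + (l2 * of_nat n ^ 2 / 4) * (of_nat (length ws) * (of_nat (length ws) - 1)/2) * x^2 \<noteq> 0"
      unfolding lw using U_nz[OF n U] by blast
    show "\<forall>w\<in>set ws. Re w > 1/2"
    proof
      fix w assume "w \<in> set ws"
      then obtain a where "a \<in> set zs" "w = z/(z-a)" by (auto simp: ws_def)
      thus "Re w > 1/2" using re_ratio rs z by blast
    qed
  qed
  ultimately show ?thesis by simp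
qed



lemma cis_ne1:
  assumes "0 < i" "i < N"
  shows "cis (2 * pi * real i / real N) \<noteq> 1"
proof
  assume "cis (2 * pi * real i / real N) = 1"
  hence "cos (2 * pi * real i / real N) = 1" by (simp add: complex_eq_iff)
  then obtain m :: int where m: "2 * pi * real i / real N = real_of_int m * 2 * pi"
    by (auto simp: cos_one_2pi_int)
  have N0: "real N > 0" using assms by simp
  have "real i = real_of_int m * real N" using m N0 by (simp add: field_simps)
  hence "int i = m * int N" by (metis of_int_eq_iff of_int_mult of_int_of_nat_eq)
  moreover have "0 < int i" "int i < int N" using assms by auto
  ultimately have "0 < m * int N" "m * int N < int N" by auto
  moreover from this(1) have "m \<ge> 1" using \<open>0 < int i\<close> \<open>int i < int N\<close> by (simp add: zero_less_mult_iff)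
  ultimately show False by (metis mult_le_cancel_right1 not_le of_nat_0_le_iff)
qed

lemma sum_unity_pow:
  assumes "i < N"
  shows "(\<Sum>j<N. (cis (2 * pi * real j / real N)) ^ i) = (if i = 0 then of_nat N else 0)"
proof (cases "i = 0")
  case True then show ?thesis by simp
next
  case False
  define \<omega> where "\<omega> = cis (2 * pi * real i / real N)"
  have eq: "(cis (2 * pi * real j / real N)) ^ i = \<omega> ^ j" for j
    by (simp add: \<omega>_def Complex.DeMoivre mult_ac)
  have w1: "\<omega> \<noteq> 1" unfolding \<omega>_def using False assms by (intro cis_ne1) auto
  have wN: "\<omega> ^ N = 1" using assms by (simp add: \<omega>_def Complex.DeMoivre)
  have "(\<Sum>j<N. \<omega> ^ j) = 0" using w1 wN by (simp add: geometric_sum)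
  then show ?thesis using False by (simp add: eq)
qed

lemma mean_value_poly:
  fixes Q :: "complex poly"
  assumes "degree Q < N"
  shows "(\<Sum>j<N. poly Q (cis (2 * pi * real j / real N))) = of_nat N * coeff Q 0"
proof -
  have "(\<Sum>j<N. poly Q (cis (2 * pi * real j / real N)))
      = (\<Sum>j<N. \<Sum>i\<le>degree Q. coeff Q i * (cis (2 * pi * real j / real N)) ^ i)"
    by (simp add: poly_altdef)
  also have "\<dots> = (\<Sum>i\<le>degree Q. coeff Q i * (\<Sum>j<N. (cis (2 * pi * real j / real N)) ^ i))"
    by (subst sum.swap) (simp add: sum_distrib_left)
  also have "\<dots> = (\<Sum>i\<le>degree Q. coeff Q i * (if i = 0 then of_nat N else 0))"
    using assms by (intro sum.cong refl) (simp add: sum_unity_pow)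
  also have "\<dots> = (\<Sum>i\<le>degree Q. if i = 0 then of_nat N * coeff Q 0 else 0)"
    by (intro sum.cong refl) auto
  also have "\<dots> = of_nat N * coeff Q 0" by (simp add: sum.delta)
  finally show ?thesis .
qed

lemma max_principle_poly:
  fixes S :: "complex poly" and M :: real
  assumes bd: "\<And>y. cmod y = 1 \<Longrightarrow> cmod (poly S y) \<le> M"
    and y: "cmod y \<le> 1"
  shows "cmod (poly S y) \<le> M"
proof -
  have "\<exists>x\<in>cball 0 1. \<forall>y\<in>cball 0 1. cmod (poly S y) \<le> cmod (poly S x)"
    by (intro continuous_attains_sup compact_cball continuous_intros) auto
  then obtain c where c: "cmod c \<le> 1" and cmax: "\<And>y. cmod y \<le> 1 \<Longrightarrow> cmod (poly S y) \<le> cmod (poly S c)"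
    by auto
  define t where "t = cmod c"
  define u where "u = (if c = 0 then 1 else c / of_real t)"
  have u1: "cmod u = 1" by (auto simp: u_def t_def norm_divide)
  have cu: "c = of_real t * u" by (auto simp: u_def t_def)
  define h where "h = of_real (1 - t) * u"
  define N where "N = Suc (degree S)"
  define Q where "Q = pcompose S [:c, h:]"
  define \<omega> where "\<omega> = (\<lambda>j::nat. cis (2 * pi * real j / real N))"
  have dQ: "degree Q < N"
  proof -
    have "degree Q \<le> degree S * degree [:c, h:]" unfolding Q_def by (rule degree_pcompose_le)
    also have "\<dots> \<le> degree S" by (cases "h = 0") auto
    finally show ?thesis by (simp add: N_def)
  qed
  have mv: "(\<Sum>j<N. poly S (c + h * \<omega> j)) = of_nat N * poly S c"
    using mean_value_poly[OF dQ] by (simp add: Q_def poly_pcompose \<omega>_def algebra_simps)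
  have t1: "t \<le> 1" "t \<ge> 0" using c by (auto simp: t_def)
  have pts: "cmod (c + h * \<omega> j) \<le> 1" for j
  proof -
    have "cmod (c + h * \<omega> j) \<le> cmod c + cmod h * cmod (\<omega> j)" by (metis norm_triangle_ineq norm_mult order_trans order_refl)
    also have "\<dots> = t + (1 - t)"
    proof -
      have "cmod (of_real (1 - t) :: complex) = 1 - t" using t1 by (simp only: norm_of_real)
      thus ?thesis using u1 by (simp add: h_def t_def \<omega>_def norm_mult)
    qed
    finally show ?thesis by simp
  qed
  have p0: "c + h * \<omega> 0 = u" by (simp add: \<omega>_def h_def cu algebra_simps)
  have "real N * cmod (poly S c) = cmod (\<Sum>j<N. poly S (c + h * \<omega> j))"
    by (simp add: mv norm_mult)
  also have "\<dots> \<le> (\<Sum>j<N. cmod (poly S (c + h * \<omega> j)))" by (rule norm_sum)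
  also have "\<dots> = cmod (poly S u) + (\<Sum>j<degree S. cmod (poly S (c + h * \<omega> (Suc j))))"
    by (simp only: N_def sum.lessThan_Suc_shift p0)
  also have "\<dots> \<le> M + (\<Sum>j<degree S. cmod (poly S c))"
    using bd[OF u1] pts cmax by (intro add_mono sum_mono) auto
  also have "\<dots> = M + real (degree S) * cmod (poly S c)" by simp
  finally have "cmod (poly S c) \<le> M" by (simp add: N_def algebra_simps)
  thus ?thesis using cmax[OF y] by simp
qed

lemma poly_out_bound:
  fixes P :: "complex poly" and k M :: real and n :: nat
  assumes k: "k > 0" and dP: "degree P \<le> n"
    and bd: "\<And>w. cmod w = k \<Longrightarrow> cmod (poly P w) \<le> M"
  shows "cmod (coeff P n) * k^n \<le> M"
    and "\<And>x. cmod x \<ge> k \<Longrightarrow> cmod (poly P x) * k^n \<le> M * (cmod x)^n"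
proof -
  define S where "S = (\<Sum>i\<le>n. monom (coeff P i * of_real k ^ i) (n - i))"
  have pS: "poly S y = (\<Sum>i\<le>n. coeff P i * of_real k ^ i * y ^ (n - i))" for y
    by (simp add: S_def poly_sum poly_monom)
  have pP: "poly P x = (\<Sum>i\<le>n. coeff P i * x ^ i)" for x
  proof -
    have "poly P x = poly (\<Sum>i\<le>n. monom (coeff P i) i) x" by (simp add: poly_as_sum_of_monoms'[OF dP])
    also have "\<dots> = (\<Sum>i\<le>n. coeff P i * x ^ i)" by (simp add: poly_sum poly_monom)
    finally show ?thesis .
  qed
  have rel: "poly S y = y ^ n * poly P (of_real k / y)" if "y \<noteq> 0" for y
  proof -
    have "y ^ n * poly P (of_real k / y) = (\<Sum>i\<le>n. coeff P i * (y ^ n * (of_real k / y) ^ i))"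
      by (simp add: pP sum_distrib_left algebra_simps)
    also have "\<dots> = (\<Sum>i\<le>n. coeff P i * of_real k ^ i * y ^ (n - i))"
    proof (intro sum.cong refl)
      fix i assume "i \<in> {..n}"
      hence i: "i \<le> n" by simp
      have "y ^ n = y ^ (n - i) * y ^ i" using i by (simp add: power_add[symmetric])
      thus "coeff P i * (y ^ n * (of_real k / y) ^ i) = coeff P i * of_real k ^ i * y ^ (n - i)"
        using that by (simp add: power_divide field_simps)
    qed
    finally show ?thesis by (simp add: pS)
  qed
  have Sb: "cmod (poly S y) \<le> M" if "cmod y \<le> 1" for y
  proof (rule max_principle_poly[OF _ that])
    fix y :: complex assume y1: "cmod y = 1"
    hence y0: "y \<noteq> 0" by auto
    have "cmod (of_real k / y) = k" using y1 k by (simp add: norm_divide)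
    hence "cmod (poly P (of_real k / y)) \<le> M" by (rule bd)
    thus "cmod (poly S y) \<le> M" using y1 by (simp add: rel[OF y0] norm_mult norm_power)
  qed
  have "poly S 0 = coeff P n * of_real k ^ n"
  proof -
    have "poly S 0 = (\<Sum>i\<le>n. if i = n then coeff P i * of_real k ^ i else 0)"
      unfolding pS by (intro sum.cong refl) (auto simp: power_0_left)
    thus ?thesis by simp
  qed
  hence "cmod (poly S 0) = cmod (coeff P n) * k ^ n" using k by (simp add: norm_mult norm_power)
  thus "cmod (coeff P n) * k^n \<le> M" using Sb[of 0] by simp
  fix x :: complex assume x: "cmod x \<ge> k"
  hence x0: "x \<noteq> 0" using k by auto
  define y where "y = of_real k / x"
  have y0: "y \<noteq> 0" using x0 k by (simp add: y_def)
  have xy: "of_real k / y = x" using x0 k by (simp add: y_def)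
  have ny: "cmod y = k / cmod x" using k by (simp add: y_def norm_divide)
  have "cmod y \<le> 1" using x k by (simp add: ny divide_le_eq_1)
  hence "cmod (poly S y) \<le> M" by (rule Sb)
  hence "(k / cmod x) ^ n * cmod (poly P x) \<le> M"
    using rel[OF y0] by (simp add: xy norm_mult norm_power ny)
  hence "(k ^ n / (cmod x) ^ n) * cmod (poly P x) \<le> M" by (simp add: power_divide)
  moreover have "(cmod x)^n > 0" using x0 by simp
  ultimately show "cmod (poly P x) * k^n \<le> M * (cmod x)^n"
    by (simp add: field_simps)
qed



lemma ratio_unit:
  fixes x a :: complex and R r k :: real
  assumes k: "k > 0" and rk: "r \<ge> k" and Rr: "R > r" and a: "cmod a < k" and x: "cmod x = 1"
  shows "cmod (of_real r * x - a) * (R + k) < cmod (of_real R * x - a) * (r + k)"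
proof -
  define X where "X = Re x * Re a + Im x * Im a"
  define \<rho> where "\<rho> = cmod a"
  have x2: "(Re x)^2 + (Im x)^2 = 1" using x by (simp add: cmod_power2[symmetric])
  have a2: "(Re a)^2 + (Im a)^2 = \<rho>^2" by (simp add: \<rho>_def cmod_power2)
  have sq: "(cmod (of_real t * x - a))^2 = t^2 - 2 * t * X + \<rho>^2" for t
  proof -
    have "(cmod (of_real t * x - a))^2 = (t * Re x - Re a)^2 + (t * Im x - Im a)^2"
      by (simp add: cmod_power2)
    also have "\<dots> = t^2 * ((Re x)^2 + (Im x)^2) - 2 * t * X + ((Re a)^2 + (Im a)^2)"
      by (simp add: X_def power2_eq_square algebra_simps)
    finally show ?thesis by (simp add: x2 a2)
  qed
  have Xb: "X \<ge> - \<rho>"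
  proof -
    have "Re (cnj x * a) = X" by (simp add: X_def)
    moreover have "\<bar>Re (cnj x * a)\<bar> \<le> cmod (cnj x * a)" by (rule abs_Re_le_cmod)
    moreover have "cmod (cnj x * a) = \<rho>" using x by (simp add: norm_mult \<rho>_def)
    ultimately show ?thesis by linarith
  qed
  have \<rho>: "\<rho> \<ge> 0" "\<rho> < k" using a by (auto simp: \<rho>_def)
  have Rrk: "R * r - k^2 \<ge> 0"
  proof -
    have "k * k \<le> R * r" using k rk Rr by (intro mult_mono) auto
    thus ?thesis by (simp add: power2_eq_square)
  qed
  define E where "E = (r + k)^2 * (R^2 - 2*R*X + \<rho>^2) - (R + k)^2 * (r^2 - 2*r*X + \<rho>^2)"
  have Eid: "E = (R - r) * (-(R + r + 2*k) * \<rho>^2 + 2 * X * (R*r - k^2) + k * (2*R*r + k*R + k*r))"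
    by (simp add: E_def power2_eq_square algebra_simps)
  have "X * (R*r - k^2) \<ge> (-\<rho>) * (R*r - k^2)" using Xb Rrk by (rule mult_right_mono)
  hence "-(R + r + 2*k) * \<rho>^2 + 2 * X * (R*r - k^2) + k * (2*R*r + k*R + k*r)
      \<ge> -(R + r + 2*k) * \<rho>^2 - 2 * \<rho> * (R*r - k^2) + k * (2*R*r + k*R + k*r)" by simp
  moreover have "-(R + r + 2*k) * \<rho>^2 - 2 * \<rho> * (R*r - k^2) + k * (2*R*r + k*R + k*r)
      = (k - \<rho>) * ((R + r + 2*k) * \<rho> + k*R + k*r + 2*R*r)"
    by (simp add: power2_eq_square algebra_simps)
  moreover have "(k - \<rho>) * ((R + r + 2*k) * \<rho> + k*R + k*r + 2*R*r) > 0"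
    using \<rho> k rk Rr by (intro mult_pos_pos) (auto intro!: add_pos_nonneg add_nonneg_pos mult_nonneg_nonneg)
  ultimately have "-(R + r + 2*k) * \<rho>^2 + 2 * X * (R*r - k^2) + k * (2*R*r + k*R + k*r) > 0" by linarith
  hence "E > 0" using Rr by (simp add: Eid)
  moreover have "(cmod (of_real r * x - a) * (R + k))^2 = (r^2 - 2*r*X + \<rho>^2) * (R + k)^2"
    by (simp only: power_mult_distrib sq)
  moreover have "(cmod (of_real R * x - a) * (r + k))^2 = (R^2 - 2*R*X + \<rho>^2) * (r + k)^2"
    by (simp only: power_mult_distrib sq)
  ultimately have "(cmod (of_real r * x - a) * (R + k))^2 < (cmod (of_real R * x - a) * (r + k))^2"
    by (simp add: E_def algebra_simps)
  thus ?thesis by (rule power_less_imp_less_base) (use k rk in auto)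
qed

lemma ratio_gen:
  fixes x a :: complex and R r k :: real
  assumes k: "k > 0" and rk: "r \<ge> k" and Rr: "R > r" and a: "cmod a < k" and x: "cmod x \<ge> 1"
  shows "cmod (of_real r * x - a) * (R + k) < cmod (of_real R * x - a) * (r + k)"
proof -
  define s where "s = cmod x"
  have s: "s \<ge> 1" using x by (simp add: s_def)
  define u where "u = x / of_real s"
  have x0: "x \<noteq> 0" using x by auto
  have u: "cmod u = 1" using s x0 by (simp add: u_def norm_divide s_def)
  have xu: "x = of_real s * u" using x0 by (simp add: u_def s_def)
  have "r * 1 \<le> r * s" using s rk k by (intro mult_left_mono) auto
  hence r1: "r * s \<ge> k" using rk by simp
  have R1: "R * s > r * s" using Rr s by simp
  have main: "cmod (of_real (r * s) * u - a) * (R * s + k) < cmod (of_real (R * s) * u - a) * (r * s + k)"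
    by (rule ratio_unit[OF k r1 R1 a u])
  have eqr: "of_real (r * s) * u = of_real r * x" by (simp add: xu)
  have eqR: "of_real (R * s) * u = of_real R * x" by (simp add: xu)
  have mono: "(R + k) * (r * s + k) \<le> (R * s + k) * (r + k)"
  proof -
    have "(R * s + k) * (r + k) - (R + k) * (r * s + k) = k * (s - 1) * (R - r)" by (simp add: algebra_simps)
    moreover have "k * (s - 1) * (R - r) \<ge> 0" using k s Rr by simp
    ultimately show ?thesis by linarith
  qed
  define A where "A = cmod (of_real r * x - a)"
  define B where "B = cmod (of_real R * x - a)"
  have A: "A \<ge> 0" by (simp add: A_def)
  have "A * (R + k) * (r * s + k) \<le> A * ((R * s + k) * (r + k))"
    using mono A by (simp add: mult.assoc mult_left_mono)
  also have "\<dots> = (A * (R * s + k)) * (r + k)" by (simp add: algebra_simps)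
  also have "\<dots> < (B * (r * s + k)) * (r + k)"
  proof (rule mult_strict_right_mono)
    show "A * (R * s + k) < B * (r * s + k)" using main by (simp only: eqr eqR A_def B_def)
  qed (use k rk in simp)
  finally have "A * (R + k) * (r * s + k) < B * (r + k) * (r * s + k)" by (simp add: algebra_simps)
  moreover have "r * s + k > 0" using r1 k by simp
  ultimately show ?thesis unfolding A_def B_def by simp
qed



lemma Bop_add: "Bop n l0 l1 l2 (p + q) z = Bop n l0 l1 l2 p z + Bop n l0 l1 l2 q z"
  by (simp add: Bop_def pderiv_add algebra_simps add_divide_distrib)

lemma Bop_diff: "Bop n l0 l1 l2 (p - q) z = Bop n l0 l1 l2 p z - Bop n l0 l1 l2 q z"
  by (simp add: Bop_def pderiv_diff algebra_simps diff_divide_distrib)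

lemma Bop_smult: "Bop n l0 l1 l2 (smult c p) z = c * Bop n l0 l1 l2 p z"
  by (simp add: Bop_def pderiv_smult algebra_simps)

lemma pcompose_monom_lin: "pcompose (monom (a::complex) n) [:0, c:] = smult (a * c ^ n) (monom 1 n)"
  by (rule poly_eqI) (simp add: coeff_pcompose_linear coeff_monom)

lemma prod_ratio:
  fixes zs :: "complex list" and x :: complex and R r k t :: real
  assumes k: "k > 0" and rk: "r \<ge> k" and Rr: "R > r" and x: "cmod x \<ge> 1"
    and t: "t = (R + k) / (r + k)"
    and zs: "\<forall>a\<in>set zs. cmod a < k" "zs \<noteq> []"
  shows "cmod (poly (\<Prod>a\<leftarrow>zs. [:-a,1:]) (of_real r * x)) * t ^ length zs
       < cmod (poly (\<Prod>a\<leftarrow>zs. [:-a,1:]) (of_real R * x))"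
  using zs
proof (induction zs)
  case Nil then show ?case by simp
next
  case (Cons a zs)
  have a: "cmod a < k" using Cons.prems by simp
  have rkp: "r + k > 0" using k rk by simp
  have one: "cmod (of_real r * x - a) * t < cmod (of_real R * x - a)"
    using ratio_gen[OF k rk Rr a x] rkp by (simp add: t field_simps)
  have t0: "t \<ge> 0" using t k rk Rr by simp
  show ?case
  proof (cases "zs = []")
    case True
    then show ?thesis using one by (simp add: norm_minus_commute)
  next
    case False
    have IH: "cmod (poly (\<Prod>a\<leftarrow>zs. [:-a,1:]) (of_real r * x)) * t ^ length zs
       < cmod (poly (\<Prod>a\<leftarrow>zs. [:-a,1:]) (of_real R * x))"
      using Cons.IH Cons.prems False by simp
    have pc: "poly (\<Prod>b\<leftarrow>a#zs. [:-b,1:]) y = (y - a) * poly (\<Prod>b\<leftarrow>zs. [:-b,1:]) y" for y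
      by (simp add: algebra_simps)
    have "cmod (poly (\<Prod>a\<leftarrow>a#zs. [:-a,1:]) (of_real r * x)) * t ^ length (a#zs)
        = (cmod (of_real r * x - a) * t) * (cmod (poly (\<Prod>a\<leftarrow>zs. [:-a,1:]) (of_real r * x)) * t ^ length zs)"
      by (simp only: pc norm_mult length_Cons power_Suc) (simp add: algebra_simps)
    also have "\<dots> < cmod (of_real R * x - a) * cmod (poly (\<Prod>a\<leftarrow>zs. [:-a,1:]) (of_real R * x))"
      using one IH t0 by (intro mult_strict_mono') auto
    also have "\<dots> = cmod (poly (\<Prod>a\<leftarrow>a#zs. [:-a,1:]) (of_real R * x))"
      by (simp only: pc norm_mult)
    finally show ?thesis .
  qed
qed

theorem corollary2p3:
  fixes n :: nat and k :: real and l0 l1 l2 :: complex and P :: "complex poly"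
  assumes n: "n \<ge> 1"
    and k: "k > 0"
    and U: "\<And>z. Upoly n l0 l1 l2 z = 0 \<Longrightarrow> cmod z \<le> cmod (z - of_nat n / 2)"
    and P: "degree P \<le> n"
  shows "(\<forall>\<alpha> \<beta> R r z. cmod \<alpha> \<le> 1 \<longrightarrow> cmod \<beta> \<le> 1 \<longrightarrow> R > r \<longrightarrow> r \<ge> k \<longrightarrow> cmod z = 1 \<longrightarrow>
            cmod (Bop n l0 l1 l2 (pcompose P [:0, complex_of_real R:]) z
                  + Phi n k R r \<alpha> \<beta> * Bop n l0 l1 l2 (pcompose P [:0, complex_of_real r:]) z)
            \<le> (1 / k^n) * cmod (complex_of_real (R^n) + complex_of_real (r^n) * Phi n k R r \<alpha> \<beta>)
                * cmod (Bop n l0 l1 l2 (monom 1 n) z)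
                * (SUP w\<in>{w. cmod w = k}. cmod (poly P w)))
       \<and> (\<forall>a::complex. a \<noteq> 0 \<longrightarrow>
            (\<forall>\<alpha> \<beta> R r z. cmod \<alpha> \<le> 1 \<longrightarrow> cmod \<beta> \<le> 1 \<longrightarrow> R > r \<longrightarrow> r \<ge> k \<longrightarrow> cmod z = 1 \<longrightarrow>
              cmod (Bop n l0 l1 l2 (pcompose (monom a n) [:0, complex_of_real R:]) z
                    + Phi n k R r \<alpha> \<beta> * Bop n l0 l1 l2 (pcompose (monom a n) [:0, complex_of_real r:]) z)
              = (1 / k^n) * cmod (complex_of_real (R^n) + complex_of_real (r^n) * Phi n k R r \<alpha> \<beta>)
                  * cmod (Bop n l0 l1 l2 (monom 1 n) z)
                  * (SUP w\<in>{w. cmod w = k}. cmod (poly (monom a n) w))))"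
proof (intro conjI allI impI)
  fix \<alpha> \<beta> :: complex and R r :: real and z :: complex
  assume \<alpha>: "cmod \<alpha> \<le> 1" and \<beta>: "cmod \<beta> \<le> 1" and Rr: "R > r" and rk: "r \<ge> k" and z: "cmod z = 1"
  define \<Phi> where "\<Phi> = Phi n k R r \<alpha> \<beta>"
  define M where "M = (SUP w\<in>{w. cmod w = k}. cmod (poly P w))"
  define T where "T = (\<lambda>Q. Bop n l0 l1 l2 (pcompose Q [:0, complex_of_real R:]) z
                  + \<Phi> * Bop n l0 l1 l2 (pcompose Q [:0, complex_of_real r:]) z)"
  define Bn where "Bn = Bop n l0 l1 l2 (monom 1 n) z"
  define A0 where "A0 = ((R + k) / (k + r))^n"
  have z1: "cmod z \<ge> 1" using z by simp
  have bdd: "bdd_above ((\<lambda>w. cmod (poly P w)) ` {w. cmod w = k})"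
  proof -
    have "{w. cmod w = k} = sphere 0 k" by (auto simp: sphere_def)
    hence "compact ((\<lambda>w. cmod (poly P w)) ` {w. cmod w = k})"
      by (auto intro!: compact_continuous_image continuous_intros)
    thus ?thesis by (intro bounded_imp_bdd_above compact_imp_bounded)
  qed
  have Mbd: "\<And>w. cmod w = k \<Longrightarrow> cmod (poly P w) \<le> M"
    unfolding M_def by (rule cSUP_upper[OF _ bdd]) simp
  have "cmod (complex_of_real k) = k" using k by simp
  hence M0: "M \<ge> 0" using Mbd by (meson norm_ge_zero order_trans)
  have A01: "A0 \<ge> 1"
  proof -
    have "(R + k) / (k + r) \<ge> 1" using Rr rk k by simp
    thus ?thesis unfolding A0_def by (rule one_le_power)
  qed
  have PhiA: "cmod \<Phi> \<le> A0"
  proof -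
    have "\<Phi> = \<beta> * of_real (A0 - cmod \<alpha>) - \<alpha>" by (simp add: \<Phi>_def Phi_def A0_def)
    hence "cmod \<Phi> \<le> cmod (\<beta> * of_real (A0 - cmod \<alpha>)) + cmod \<alpha>"
      by (simp only: norm_triangle_ineq4)
    also have "\<dots> = cmod \<beta> * \<bar>A0 - cmod \<alpha>\<bar> + cmod \<alpha>" by (simp only: norm_mult norm_of_real)
    also have "\<dots> \<le> 1 * (A0 - cmod \<alpha>) + cmod \<alpha>" using \<beta> A01 \<alpha> by (intro add_mono mult_mono) auto
    finally show ?thesis by simp
  qed
  have Rn0: "of_real R ^ n + of_real r ^ n * \<Phi> \<noteq> 0"
  proof
    assume h: "of_real R ^ n + of_real r ^ n * \<Phi> = 0"
    have "of_real R ^ n = - (of_real r ^ n * \<Phi>)" using h by (simp add: eq_neg_iff_add_eq_0)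
    hence "cmod (of_real R ^ n :: complex) = cmod (of_real r ^ n * \<Phi>)" by simp
    moreover have "cmod (of_real R ^ n :: complex) = R ^ n" using k rk Rr by (simp add: norm_power)
    ultimately have "R ^ n = cmod (of_real r ^ n * \<Phi>)" by simp
    also have "\<dots> \<le> r ^ n * A0" using PhiA rk k by (simp add: norm_mult norm_power mult_left_mono)
    also have "\<dots> < R ^ n"
    proof -
      have "r ^ n * A0 = (r * (R + k) / (k + r)) ^ n" by (simp add: A0_def power_mult_distrib power_divide)
      also have "\<dots> < R ^ n"
      proof (rule power_strict_mono)
        have "r * (R + k) < R * (k + r)" using Rr k by (simp add: algebra_simps)
        thus "r * (R + k) / (k + r) < R" using k rk by (simp add: divide_less_eq)
        show "0 \<le> r * (R + k) / (k + r)" using k rk Rr by simp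
      qed (use n in simp)
      finally show ?thesis .
    qed
    finally show False by simp
  qed
  have Tdiff: "T (p - smult c q) = T p - c * T q" for p q c
    by (simp add: T_def pcompose_diff pcompose_smult Bop_diff Bop_smult algebra_simps)
  have Tm: "T (monom 1 n) = (of_real R ^ n + of_real r ^ n * \<Phi>) * Bn"
    by (simp add: T_def pcompose_monom_lin Bop_smult Bn_def algebra_simps)
  have Bn0: "Bn \<noteq> 0" unfolding Bn_def
  proof (rule bop_nz[OF n U _ _ z1])
    show "degree (monom 1 n :: complex poly) = n" by (simp add: degree_monom_eq)
    show "\<And>x. 1 \<le> cmod x \<Longrightarrow> poly (monom 1 n) x \<noteq> 0" by (auto simp: poly_monom)
  qed
  have Tm0: "T (monom 1 n) \<noteq> 0" using Rn0 Bn0 by (simp add: Tm)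
  have RHS: "(1 / k^n) * cmod (complex_of_real (R^n) + complex_of_real (r^n) * Phi n k R r \<alpha> \<beta>)
                * cmod (Bop n l0 l1 l2 (monom 1 n) z)
                * (SUP w\<in>{w. cmod w = k}. cmod (poly P w))
      = M / k^n * cmod (T (monom 1 n))"
    unfolding Tm Bn_def M_def \<Phi>_def by (simp add: norm_mult)
  have eqL: "Bop n l0 l1 l2 (pcompose P [:0, complex_of_real R:]) z
                  + Phi n k R r \<alpha> \<beta> * Bop n l0 l1 l2 (pcompose P [:0, complex_of_real r:]) z = T P"
    by (simp add: T_def \<Phi>_def)
  show "cmod (Bop n l0 l1 l2 (pcompose P [:0, complex_of_real R:]) z
                  + Phi n k R r \<alpha> \<beta> * Bop n l0 l1 l2 (pcompose P [:0, complex_of_real r:]) z)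
            \<le> (1 / k^n) * cmod (complex_of_real (R^n) + complex_of_real (r^n) * Phi n k R r \<alpha> \<beta>)
                * cmod (Bop n l0 l1 l2 (monom 1 n) z)
                * (SUP w\<in>{w. cmod w = k}. cmod (poly P w))"
  proof (rule ccontr)
    assume "\<not> ?thesis"
    hence gt: "cmod (T P) > M / k^n * cmod (T (monom 1 n))"
      unfolding eqL RHS by simp
    define \<mu> where "\<mu> = T P / T (monom 1 n)"
    have mu: "cmod \<mu> > M / k^n"
    proof -
      have "cmod (T (monom 1 n)) > 0" using Tm0 by simp
      thus ?thesis using gt by (simp add: \<mu>_def norm_divide pos_less_divide_eq)
    qed
    define F where "F = P - smult \<mu> (monom 1 n)"
    have TF: "T F = 0" using Tm0 by (simp add: F_def Tdiff \<mu>_def)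
    have cP: "cmod (coeff P n) * k^n \<le> M" using poly_out_bound(1)[OF k P Mbd] by blast
    have kn: "k^n > 0" using k by simp
    have cF: "coeff F n \<noteq> 0"
    proof
      assume "coeff F n = 0"
      hence "coeff P n = \<mu>" by (simp add: F_def)
      hence "cmod \<mu> \<le> M / k^n" using cP kn by (simp add: pos_le_divide_eq)
      thus False using mu by simp
    qed
    have dF: "degree F = n"
    proof (rule antisym)
      show "degree F \<le> n" unfolding F_def
        by (intro degree_diff_le P) (simp add: degree_monom_le)
      show "n \<le> degree F" by (rule le_degree[OF cF])
    qed
    have Fnz: "poly F x \<noteq> 0" if x: "cmod x \<ge> k" for x
    proof
      assume h: "poly F x = 0"
      hence "poly P x = \<mu> * x ^ n" by (simp add: F_def poly_monom)
      hence "cmod \<mu> * (cmod x)^n * k^n \<le> M * (cmod x)^n"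
        using poly_out_bound(2)[OF k P Mbd x] by (simp add: norm_mult norm_power)
      moreover have "(cmod x)^n > 0" using x k by (intro zero_less_power) linarith
      ultimately have "cmod \<mu> * k^n \<le> M"
        by (simp add: algebra_simps mult_le_cancel_right_pos)
      hence "cmod \<mu> \<le> M / k^n" using kn by (simp add: pos_le_divide_eq)
      thus False using mu by simp
    qed
    have F0: "F \<noteq> 0" using cF by auto
    obtain zs where lz: "length zs = degree F" and Feq: "F = smult (lead_coeff F) (\<Prod>a\<leftarrow>zs. [:-a,1:])"
      and rts: "\<forall>a\<in>set zs. poly F a = 0"
      using poly_factor_list[OF F0] by blast
    have zsk: "\<forall>a\<in>set zs. cmod a < k" using rts Fnz by (meson not_le)
    have zsne: "zs \<noteq> []" using lz dF n by auto
    define G where "G = pcompose F [:0, complex_of_real R:] + smult \<Phi> (pcompose F [:0, complex_of_real r:])"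
    have TG: "T F = Bop n l0 l1 l2 G z" by (simp add: T_def G_def Bop_add Bop_smult)
    have Gnz: "poly G x \<noteq> 0" if x: "cmod x \<ge> 1" for x
    proof -
      define t where "t = (R + k) / (r + k)"
      have pr: "cmod (poly (\<Prod>a\<leftarrow>zs. [:-a,1:]) (of_real r * x)) * t ^ length zs
          < cmod (poly (\<Prod>a\<leftarrow>zs. [:-a,1:]) (of_real R * x))"
        by (rule prod_ratio[OF k rk Rr x t_def zsk zsne])
      have tA: "t ^ length zs = A0" using lz dF by (simp add: t_def A0_def add.commute)
      have lc: "lead_coeff F \<noteq> 0" using F0 by simp
      have "cmod (poly F (of_real r * x)) * A0 < cmod (poly F (of_real R * x))"
      proof -
        have "cmod (poly F (of_real r * x)) * A0 = cmod (lead_coeff F) * (cmod (poly (\<Prod>a\<leftarrow>zs. [:-a,1:]) (of_real r * x)) * t ^ length zs)"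
          by (subst Feq) (simp add: norm_mult tA)
        also have "\<dots> < cmod (lead_coeff F) * cmod (poly (\<Prod>a\<leftarrow>zs. [:-a,1:]) (of_real R * x))"
          using lc pr by simp
        also have "\<dots> = cmod (poly F (of_real R * x))" by (subst (2) Feq) (simp add: norm_mult)
        finally show ?thesis .
      qed
      moreover have "cmod (\<Phi> * poly F (of_real r * x)) \<le> cmod (poly F (of_real r * x)) * A0"
        using PhiA by (simp add: norm_mult mult.commute mult_right_mono)
      ultimately have "cmod (\<Phi> * poly F (of_real r * x)) < cmod (poly F (of_real R * x))" by simp
      moreover have "poly G x = poly F (of_real R * x) + \<Phi> * poly F (of_real r * x)"
        by (simp add: G_def poly_pcompose mult.commute)
      ultimately show ?thesis
      proof (intro notI)
        assume lt: "cmod (\<Phi> * poly F (of_real r * x)) < cmod (poly F (of_real R * x))"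
          and pg: "poly G x = poly F (of_real R * x) + \<Phi> * poly F (of_real r * x)"
          and g0: "poly G x = 0"
        have "poly F (of_real R * x) = - (\<Phi> * poly F (of_real r * x))" using pg g0 by (simp add: eq_neg_iff_add_eq_0)
        hence "cmod (poly F (of_real R * x)) = cmod (\<Phi> * poly F (of_real r * x))" by simp
        thus False using lt by simp
      qed
    qed
    have dG: "degree G = n"
    proof (rule antisym)
      show "degree G \<le> n" unfolding G_def
      proof (intro degree_add_le order.trans[OF degree_smult_le])
        show "degree (pcompose F [:0, complex_of_real R:]) \<le> n"
          using degree_pcompose_le[of F "[:0, complex_of_real R:]"] dF
          by (cases "R = 0") auto
        show "degree (pcompose F [:0, complex_of_real r:]) \<le> n"
          using degree_pcompose_le[of F "[:0, complex_of_real r:]"] dF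
          by (cases "r = 0") auto
      qed
      have "coeff G n = coeff F n * (of_real R ^ n + of_real r ^ n * \<Phi>)"
        by (simp add: G_def coeff_pcompose_linear algebra_simps)
      hence "coeff G n \<noteq> 0" using cF Rn0 by simp
      thus "n \<le> degree G" by (rule le_degree)
    qed
    have "Bop n l0 l1 l2 G z \<noteq> 0" by (rule bop_nz[OF n U dG Gnz z1])
    thus False using TF TG by simp
  qed
next
  fix a :: complex and \<alpha> \<beta> :: complex and R r :: real and z :: complex
  assume a: "a \<noteq> 0" and \<alpha>: "cmod \<alpha> \<le> 1" and \<beta>: "cmod \<beta> \<le> 1" and Rr: "R > r" and rk: "r \<ge> k" and z: "cmod z = 1"
  have S: "(SUP w\<in>{w. cmod w = k}. cmod (poly (monom a n) w)) = cmod a * k ^ n"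
  proof -
    have "(SUP w\<in>{w. cmod w = k}. cmod (poly (monom a n) w)) = (SUP w\<in>{w. cmod w = k}. cmod a * k ^ n)"
      by (rule SUP_cong) (auto simp: poly_monom norm_mult norm_power)
    also have "\<dots> = cmod a * k ^ n"
    proof (rule cSUP_const)
      have "complex_of_real k \<in> {w. cmod w = k}" using k by simp
      thus "{w. cmod w = k} \<noteq> {}" by blast
    qed
    finally show ?thesis .
  qed
  have kn: "k ^ n > 0" using k by simp
  show "cmod (Bop n l0 l1 l2 (pcompose (monom a n) [:0, complex_of_real R:]) z
                    + Phi n k R r \<alpha> \<beta> * Bop n l0 l1 l2 (pcompose (monom a n) [:0, complex_of_real r:]) z)
              = (1 / k^n) * cmod (complex_of_real (R^n) + complex_of_real (r^n) * Phi n k R r \<alpha> \<beta>)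
                  * cmod (Bop n l0 l1 l2 (monom 1 n) z)
                  * (SUP w\<in>{w. cmod w = k}. cmod (poly (monom a n) w))"
  proof -
    define \<Phi> where "\<Phi> = Phi n k R r \<alpha> \<beta>"
    define B where "B = Bop n l0 l1 l2 (monom 1 n) z"
    define X where "X = cmod (complex_of_real (R^n) + complex_of_real (r^n) * \<Phi>)"
    have L: "Bop n l0 l1 l2 (pcompose (monom a n) [:0, complex_of_real R:]) z
                    + \<Phi> * Bop n l0 l1 l2 (pcompose (monom a n) [:0, complex_of_real r:]) z
           = a * (complex_of_real (R^n) + complex_of_real (r^n) * \<Phi>) * B"
      by (simp add: pcompose_monom_lin Bop_smult B_def algebra_simps)
    have "cmod (a * (complex_of_real (R^n) + complex_of_real (r^n) * \<Phi>) * B) = cmod a * X * cmod B"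
      by (simp only: norm_mult X_def)
    also have "\<dots> = (1 / k^n) * X * cmod B * (cmod a * k ^ n)" using kn k by (simp add: field_simps)
    finally show ?thesis unfolding S L[unfolded \<Phi>_def B_def] by (simp add: X_def \<Phi>_def B_def)
  qed
qed


end
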